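(* Let $v=(x,y,z)\in S$ be a point with at least one irrational coordinate, and consider the subsequence of its itinerary consisting of the symbols not of type $\mathbb{A}$ (this subsequence may be empty, finite, or infinite). (i) The subsequence contains no symbol of type $\mathbb{C}$ before its first $\mathbb{B}$-type... more precisely: the non-$\mathbb{A}$ symbols of the itinerary alternate in type $\mathbb{B},\mathbb{C},\mathbb{B},\mathbb{C},\dots$ starting with type $\mathbb{B}$ (or there are none) if and only if $z=0$. (ii) The non-$\mathbb{A}$ symbols of the itinerary alternate in type $\mathbb{C},\mathbb{B},\mathbb{C},\mathbb{B},\dots$ starting with type $\mathbb{C}$ (or there are none) if and only if $y=z$.
   Context: Let $S = \{(x,y,z)\in\mathbb{R}^3 : 0\le z\le y\le x\le 1\}$; its faces $\{z=0\}$ and $\{y=z\}$ are called $\mathsf{AB}$ and $\mathsf{AC}$. For integers $n\ge1$ define $\mathbb{A}_n = \{\frac1{n+1} < x \le \frac1n,\ 0\le z\le y\le 1-nx\}$, $\mathbb{B}_n = \{0\le z\le 1-nx < y \le x\}$, $\mathbb{C}_n = \{1-nx < z \le y \le x \le \frac1n\}$; together with $\{(0,0,0)\}$ they partition $S$. The 3-dimensional Gauss map $G:S\to S$ is $G(0,0,0)=(0,0,0)$, $G(x,y,z)=\left(\frac1x-n,\frac yx,\frac zx\right)$ on $\mathbb{A}_n$, $G(x,y,z)=\left(\frac{1-y}{x}-n+1,\frac{x-y+z}{x},\frac{x-y}{x}\right)$ on $\mathbb{B}_n$, $G(x,y,z)=\left(\frac{1-z}{x}-n+1,\frac{x-z}{x},\frac{y-z}{x}\right)$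 on $\mathbb{C}_n$. For a point $v$ whose forward orbit never hits the origin (which holds whenever $v$ has an irrational coordinate), its itinerary is the sequence $\mathbb{X}_{a_1},\mathbb{X}_{a_2},\dots$ ($\mathbb{X}\in\{\mathbb{A},\mathbb{B},\mathbb{C}\}$, $a_k\ge1$) with $G^{k-1}(v)\in\mathbb{X}_{a_k}$; a symbol $\mathbb{X}_{a}$ is "of type $\mathbb{X}$". *)

theory Defs
  imports Complex_Main
begin

type_synonym pt = "real \<times> real \<times> real"

definition simplexS :: "pt set" where
  "simplexS = {(x,y,z). 0 \<le> z \<and> z \<le> y \<and> y \<le> x \<and> x \<le> 1}"

definition inA :: "nat \<Rightarrow> pt \<Rightarrow> bool" where
  "inA n v = (case v of (x,y,z) \<Rightarrow>
     1 / (real n + 1) < x \<and> x \<le> 1 / real n \<and> 0 \<le> z \<and> z \<le> y \<and> y \<le> 1 - real n * x)"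

definition inB :: "nat \<Rightarrow> pt \<Rightarrow> bool" where
  "inB n v = (case v of (x,y,z) \<Rightarrow>
     0 \<le> z \<and> z \<le> 1 - real n * x \<and> 1 - real n * x < y \<and> y \<le> x)"

definition inC :: "nat \<Rightarrow> pt \<Rightarrow> bool" where
  "inC n v = (case v of (x,y,z) \<Rightarrow>
     1 - real n * x < z \<and> z \<le> y \<and> y \<le> x \<and> x \<le> 1 / real n)"

definition gauss3 :: "pt \<Rightarrow> pt" where
  "gauss3 v = (case v of (x,y,z) \<Rightarrow>
     if v = (0,0,0) then (0,0,0)
     else if (\<exists>n\<ge>1. inA n v) then
       (let n = (THE n. n \<ge> 1 \<and> inA n v) in (1/x - real n, y/x, z/x))
     else if (\<exists>n\<ge>1. inB n v) then
       (let n = (THE n. n \<ge> 1 \<and> inB n v) in ((1-y)/x - real n + 1, (x-y+z)/x, (x-y)/x))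
     else if (\<exists>n\<ge>1. inC n v) then
       (let n = (THE n. n \<ge> 1 \<and> inC n v) in ((1-z)/x - real n + 1, (x-z)/x, (y-z)/x))
     else v)"

datatype symtype = TA | TB | TC

text \<open>Type of the piece containing a point (for points other than the origin).\<close>
definition sym_type :: "pt \<Rightarrow> symtype" where
  "sym_type v = (if \<exists>n\<ge>1. inA n v then TA else if \<exists>n\<ge>1. inB n v then TB else TC)"

text \<open>Type of the (k+1)-th symbol of the itinerary of v (k counted from 0).\<close>
definition itin_type :: "pt \<Rightarrow> nat \<Rightarrow> symtype" where
  "itin_type v k = sym_type ((gauss3 ^^ k) v)"

definition nonA_alternate :: "symtype \<Rightarrow> symtype \<Rightarrow> (nat \<Rightarrow> symtype) \<Rightarrow> bool" where
  "nonA_alternate t0 t1 s = (\<forall>k. s k \<noteq> TA \<longrightarrow>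
      s k = (if even (card {j. j < k \<and> s j \<noteq> TA}) then t0 else t1))"

end

theory Submission imports Defs begin

lemma nat_unique:
  fixes x :: real
  assumes "x > 0" "real n * x \<le> 1" "1 < (real n + 1) * x"
    "real m * x \<le> 1" "1 < (real m + 1) * x"
  shows "n = m"
proof (rule ccontr)
  assume "n \<noteq> m"
  then consider "n < m" | "m < n" by linarith
  then show False
  proof cases
    case 1
    then have "real n + 1 \<le> real m" by simp
    then have "(real n + 1) * x \<le> real m * x" using assms(1) by (simp add: mult_right_mono)
    then show False using assms by linarith
  next
    case 2
    then have "real m + 1 \<le> real n" by simp
    then have "(real m + 1) * x \<le> real n * x" using assms(1) by (simp add: mult_right_mono)
    then show False using assms by linarith
  qed
qed

lemma inA_bnd: assumes "inA n (x,y,z)" "n \<ge> 1"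
  shows "0 < x \<and> real n * x \<le> 1 \<and> 1 < (real n + 1) * x"
proof -
  have n: "real n > 0" using assms by simp
  have a: "1/(real n + 1) < x" "x \<le> 1 / real n" using assms unfolding inA_def by auto
  have "0 < x" using a(1) n by (smt (verit) divide_pos_pos)
  moreover have "real n * x \<le> 1" using a(2) n by (simp add: le_divide_eq mult.commute)
  moreover have "1 < (real n + 1) * x" using a(1) n by (simp add: divide_less_eq mult.commute)
  ultimately show ?thesis by blast
qed

lemma inB_bnd: assumes "inB n (x,y,z)" "n \<ge> 1"
  shows "0 < x \<and> real n * x \<le> 1 \<and> 1 < (real n + 1) * x"
proof -
  have a: "0 \<le> z" "z \<le> 1 - real n * x" "1 - real n * x < y" "y \<le> x" using assms unfolding inB_def by auto
  have "real n * x \<le> 1" using a by linarith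
  moreover have "1 < (real n + 1) * x" using a by (simp add: distrib_right)
  moreover have "0 < x"
  proof (rule ccontr)
    assume "\<not> 0 < x"
    then have "(real n + 1) * x \<le> 0" by (simp add: mult_nonneg_nonpos)
    then show False using calculation by linarith
  qed
  ultimately show ?thesis by blast
qed

lemma inC_bnd: assumes "inC n (x,y,z)" "n \<ge> 1"
  shows "0 < x \<and> real n * x \<le> 1 \<and> 1 < (real n + 1) * x"
proof -
  have n: "real n > 0" using assms by simp
  have a: "1 - real n * x < z" "z \<le> y" "y \<le> x" "x \<le> 1 / real n" using assms unfolding inC_def by auto
  have "real n * x \<le> 1" using a(4) n by (simp add: le_divide_eq mult.commute)
  moreover have "1 < (real n + 1) * x" using a by (simp add: distrib_right)
  moreover have "0 < x"
  proof (rule ccontr)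
    assume "\<not> 0 < x"
    then have "(real n + 1) * x \<le> 0" by (simp add: mult_nonneg_nonpos)
    then show False using calculation by linarith
  qed
  ultimately show ?thesis by blast
qed

lemma cover:
  assumes "(x,y,z) \<in> simplexS" "x > 0"
  shows "\<exists>n\<ge>1. inA n (x,y,z) \<or> inB n (x,y,z) \<or> inC n (x,y,z)"
proof -
  have S: "0 \<le> z" "z \<le> y" "y \<le> x" "x \<le> 1" using assms unfolding simplexS_def by auto
  define n where "n = nat \<lfloor>1/x\<rfloor>"
  have g1: "1/x \<ge> 1" using S assms by simp
  have fge: "\<lfloor>1/x\<rfloor> \<ge> 1" using g1 by linarith
  have rn: "real n = of_int \<lfloor>1/x\<rfloor>" unfolding n_def using of_nat_nat[of "\<lfloor>1/x\<rfloor>", where 'a=real] fge by linarith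
  have fl: "real n \<le> 1/x" "1/x < real n + 1" unfolding rn by linarith+
  have n1: "n \<ge> 1" unfolding n_def using g1 by linarith
  have npos: "real n > 0" using n1 by simp
  have b1: "real n * x \<le> 1" using fl(1) assms by (simp add: le_divide_eq)
  have b2: "1 < (real n + 1) * x" using fl(2) assms by (simp add: divide_less_eq)
  have c1: "x \<le> 1 / real n" using b1 npos by (simp add: le_divide_eq mult.commute)
  have c2: "1/(real n + 1) < x" using b2 npos by (simp add: divide_less_eq mult.commute)
  show ?thesis
  proof (cases "y \<le> 1 - real n * x")
    case True
    then have "inA n (x,y,z)" unfolding inA_def using c1 c2 S by auto
    then show ?thesis using n1 by blast
  next
    case F: False
    show ?thesis
    proof (cases "z \<le> 1 - real n * x")
      case True
      then have "inB n (x,y,z)" unfolding inB_def using F S by auto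
      then show ?thesis using n1 by blast
    next
      case False
      then have "inC n (x,y,z)" unfolding inC_def using c1 S by auto
      then show ?thesis using n1 by blast
    qed
  qed
qed


lemma ne0: "x > 0 \<Longrightarrow> (x,y,z) \<noteq> ((0,0,0)::pt)" by auto

lemma gA: assumes "inA n (x,y,z)" "n \<ge> 1"
  shows "gauss3 (x,y,z) = (1/x - real n, y/x, z/x) \<and> sym_type (x,y,z) = TA"
proof -
  have b: "0 < x \<and> real n * x \<le> 1 \<and> 1 < (real n + 1) * x" using inA_bnd[OF assms] .
  have th: "(THE m. m \<ge> 1 \<and> inA m (x,y,z)) = n"
  proof (rule the_equality)
    show "n \<ge> 1 \<and> inA n (x,y,z)" using assms by simp
    fix m assume "m \<ge> 1 \<and> inA m (x,y,z)"
    then have "0 < x \<and> real m * x \<le> 1 \<and> 1 < (real m + 1) * x" using inA_bnd by blast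
    then show "m = n" using b nat_unique by blast
  qed
  have ex: "\<exists>m\<ge>1. inA m (x,y,z)" using assms by blast
  have ne: "(x,y,z) \<noteq> ((0,0,0)::pt)" using b by auto
  show ?thesis unfolding gauss3_def sym_type_def prod.case
    by (simp only: if_not_P[OF ne] if_P[OF ex] th Let_def)
qed

lemma gB: assumes "inB n (x,y,z)" "n \<ge> 1"
  shows "gauss3 (x,y,z) = ((1-y)/x - real n + 1, (x-y+z)/x, (x-y)/x) \<and> sym_type (x,y,z) = TB"
proof -
  have b: "0 < x \<and> real n * x \<le> 1 \<and> 1 < (real n + 1) * x" using inB_bnd[OF assms] .
  have th: "(THE m. m \<ge> 1 \<and> inB m (x,y,z)) = n"
  proof (rule the_equality)
    show "n \<ge> 1 \<and> inB n (x,y,z)" using assms by simp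
    fix m assume "m \<ge> 1 \<and> inB m (x,y,z)"
    then have "0 < x \<and> real m * x \<le> 1 \<and> 1 < (real m + 1) * x" using inB_bnd by blast
    then show "m = n" using b nat_unique by blast
  qed
  have nA: "\<not> (\<exists>m\<ge>1. inA m (x,y,z))"
  proof
    assume "\<exists>m\<ge>1. inA m (x,y,z)"
    then obtain m where m: "m \<ge> 1" "inA m (x,y,z)" by blast
    then have "0 < x \<and> real m * x \<le> 1 \<and> 1 < (real m + 1) * x" using inA_bnd by blast
    then have "m = n" using b nat_unique by blast
    then show False using m assms unfolding inA_def inB_def by auto
  qed
  have ex: "\<exists>m\<ge>1. inB m (x,y,z)" using assms by blast
  have ne: "(x,y,z) \<noteq> ((0,0,0)::pt)" using b by auto
  show ?thesis unfolding gauss3_def sym_type_def prod.case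
    by (simp only: if_not_P[OF ne] if_not_P[OF nA] if_P[OF ex] th Let_def)
qed

lemma gC: assumes "inC n (x,y,z)" "n \<ge> 1"
  shows "gauss3 (x,y,z) = ((1-z)/x - real n + 1, (x-z)/x, (y-z)/x) \<and> sym_type (x,y,z) = TC"
proof -
  have b: "0 < x \<and> real n * x \<le> 1 \<and> 1 < (real n + 1) * x" using inC_bnd[OF assms] .
  have th: "(THE m. m \<ge> 1 \<and> inC m (x,y,z)) = n"
  proof (rule the_equality)
    show "n \<ge> 1 \<and> inC n (x,y,z)" using assms by simp
    fix m assume "m \<ge> 1 \<and> inC m (x,y,z)"
    then have "0 < x \<and> real m * x \<le> 1 \<and> 1 < (real m + 1) * x" using inC_bnd by blast
    then show "m = n" using b nat_unique by blast
  qed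
  have nA: "\<not> (\<exists>m\<ge>1. inA m (x,y,z))"
  proof
    assume "\<exists>m\<ge>1. inA m (x,y,z)"
    then obtain m where m: "m \<ge> 1" "inA m (x,y,z)" by blast
    then have "0 < x \<and> real m * x \<le> 1 \<and> 1 < (real m + 1) * x" using inA_bnd by blast
    then have "m = n" using b nat_unique by blast
    then show False using m assms unfolding inA_def inC_def by auto
  qed
  have nB: "\<not> (\<exists>m\<ge>1. inB m (x,y,z))"
  proof
    assume "\<exists>m\<ge>1. inB m (x,y,z)"
    then obtain m where m: "m \<ge> 1" "inB m (x,y,z)" by blast
    then have "0 < x \<and> real m * x \<le> 1 \<and> 1 < (real m + 1) * x" using inB_bnd by blast
    then have "m = n" using b nat_unique by blast
    then show False using m assms unfolding inB_def inC_def by auto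
  qed
  have ex: "\<exists>m\<ge>1. inC m (x,y,z)" using assms by blast
  have ne: "(x,y,z) \<noteq> ((0,0,0)::pt)" using b by auto
  show ?thesis unfolding gauss3_def sym_type_def prod.case
    by (simp only: if_not_P[OF ne] if_not_P[OF nA] if_not_P[OF nB] if_P[OF ex] th Let_def)
qed


definition irr :: "pt \<Rightarrow> bool" where
  "irr v = (case v of (x,y,z) \<Rightarrow> x \<notin> \<rat> \<or> y \<notin> \<rat> \<or> z \<notin> \<rat>)"

lemma recip_rat: fixes x :: real assumes "x \<noteq> 0" "1/x \<in> \<rat>" shows "x \<in> \<rat>"
proof -
  have "x = 1 / (1/x)" using assms by simp
  then show ?thesis using assms Rats_divide Rats_1 by metis
qed

lemma times_rat: fixes x :: real assumes "x \<noteq> 0" "y/x \<in> \<rat>" "x \<in> \<rat>" shows "y \<in> \<rat>"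
proof -
  have "y = (y/x) * x" using assms by simp
  then show ?thesis using assms Rats_mult by metis
qed


lemma divle: fixes x :: real assumes "x > 0" "p \<le> q" shows "p/x \<le> q/x"
  using assms by (simp add: divide_right_mono)

lemma SA: assumes "x > 0" "0 \<le> z" "z \<le> y" "y \<le> 1 - real n * x" "1 < (real n + 1) * x"
  shows "(1/x - real n, y/x, z/x) \<in> simplexS"
proof -
  have e: "1/x - real n = (1 - real n * x)/x" using assms(1) by (simp add: field_simps)
  have "1/x < real n + 1" using assms(1,5) by (simp add: divide_less_eq mult.commute)
  moreover have "0 \<le> z/x" using assms by simp
  moreover have "z/x \<le> y/x" using divle assms by blast
  moreover have "y/x \<le> 1/x - real n" unfolding e using divle assms by blast
  ultimately show ?thesis unfolding simplexS_def by simp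
qed

lemma SB: assumes "x > 0" "0 \<le> z" "z \<le> 1 - real n * x" "1 - real n * x < y" "y \<le> x"
  shows "((1-y)/x - real n + 1, (x-y+z)/x, (x-y)/x) \<in> simplexS"
proof -
  have e: "(1-y)/x - real n + 1 = (1 - y - real n * x + x)/x" using assms(1) by (simp add: field_simps)
  have "(1 - y - real n * x + x)/x \<le> x/x" using divle assms by simp
  then have "(1-y)/x - real n + 1 \<le> 1" using e assms(1) by simp
  moreover have "0 \<le> (x-y)/x" using assms by simp
  moreover have "(x-y)/x \<le> (x-y+z)/x" using divle assms by simp
  moreover have "(x-y+z)/x \<le> (1-y)/x - real n + 1" unfolding e using divle assms by simp
  ultimately show ?thesis unfolding simplexS_def by simp
qed

lemma SC: assumes "x > 0" "1 - real n * x < z" "z \<le> y" "y \<le> x" "real n * x \<le> 1"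
  shows "((1-z)/x - real n + 1, (x-z)/x, (y-z)/x) \<in> simplexS"
proof -
  have e: "(1-z)/x - real n + 1 = (1 - z - real n * x + x)/x" using assms(1) by (simp add: field_simps)
  have "(1 - z - real n * x + x)/x \<le> x/x" using divle assms by simp
  then have "(1-z)/x - real n + 1 \<le> 1" using e assms(1) by simp
  moreover have "0 \<le> (y-z)/x" using assms by simp
  moreover have "(y-z)/x \<le> (x-z)/x" using divle assms by simp
  moreover have "(x-z)/x \<le> (1-z)/x - real n + 1" unfolding e using divle assms by simp
  ultimately show ?thesis unfolding simplexS_def by simp
qed

lemma step:
  assumes S: "(x,y,z) \<in> simplexS" and I: "irr (x,y,z)" and G: "gauss3 (x,y,z) = (a,b,c)"
  shows "x > 0 \<and> (a,b,c) \<in> simplexS \<and> irr (a,b,c) \<and>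
    ((sym_type (x,y,z) = TA \<and> b = y/x \<and> c = z/x) \<or>
     (sym_type (x,y,z) = TB \<and> b = (x-y+z)/x \<and> c = (x-y)/x \<and> y - z > 0) \<or>
     (sym_type (x,y,z) = TC \<and> b = (x-z)/x \<and> c = (y-z)/x \<and> z > 0))"
proof -
  have s: "0 \<le> z" "z \<le> y" "y \<le> x" "x \<le> 1" using S unfolding simplexS_def by auto
  have xp: "x > 0"
  proof (rule ccontr)
    assume "\<not> x > 0"
    then have "x = 0" "y = 0" "z = 0" using s by auto
    then show False using I unfolding irr_def by simp
  qed
  have x0: "x \<noteq> 0" using xp by simp
  obtain n where n: "n \<ge> 1" "inA n (x,y,z) \<or> inB n (x,y,z) \<or> inC n (x,y,z)" using cover[OF S xp] by blast
  have nn: "real n \<ge> 1" using n by simp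
  show ?thesis
  proof -
    consider (A) "inA n (x,y,z)" | (B) "inB n (x,y,z)" | (C) "inC n (x,y,z)" using n by blast
    then show ?thesis
    proof cases
      case A
      have e: "a = 1/x - real n" "b = y/x" "c = z/x" "sym_type (x,y,z) = TA" using gA[OF A n(1)] G by auto
      have bd: "real n * x \<le> 1" "1 < (real n + 1) * x" using inA_bnd[OF A n(1)] by auto
      have c: "y \<le> 1 - real n * x" using A unfolding inA_def by auto
      have "(a,b,c) \<in> simplexS" using SA[OF xp s(1,2) c bd(2)] e by simp
      moreover have "irr (a,b,c)"
      proof (rule ccontr)
        assume "\<not> irr (a,b,c)"
        then have r: "a \<in> \<rat>" "b \<in> \<rat>" "c \<in> \<rat>" unfolding irr_def by auto
        have "1/x = a + real n" using e by simp
        moreover have "a + real n \<in> \<rat>" using r(1) by (intro Rats_add Rats_of_nat)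
        ultimately have "1/x \<in> \<rat>" by simp
        then have xr: "x \<in> \<rat>" using recip_rat x0 by blast
        have "y/x \<in> \<rat>" "z/x \<in> \<rat>" using r e by simp_all
        then have "y \<in> \<rat>" "z \<in> \<rat>" using times_rat[OF x0 _ xr] by blast+
        then show False using xr I unfolding irr_def by simp
      qed
      ultimately show ?thesis using xp e by blast
    next
      case B
      have e: "a = (1-y)/x - real n + 1" "b = (x-y+z)/x" "c = (x-y)/x" "sym_type (x,y,z) = TB" using gB[OF B n(1)] G by auto
      have c: "0 \<le> z" "z \<le> 1 - real n * x" "1 - real n * x < y" "y \<le> x" using B unfolding inB_def by auto
      have "(a,b,c) \<in> simplexS" using SB[OF xp c] e by simp
      moreover have "irr (a,b,c)"
      proof (rule ccontr)
        assume "\<not> irr (a,b,c)"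
        then have r: "a \<in> \<rat>" "b \<in> \<rat>" "c \<in> \<rat>" unfolding irr_def by auto
        have yx: "y/x = 1 - c" using e x0 by (simp add: field_simps)
        then have yxr: "y/x \<in> \<rat>" using r by (simp add: Rats_diff)
        have "1/x = a + real n - 1 + y/x" using e x0 by (simp add: field_simps)
        moreover have "a + real n - 1 + y/x \<in> \<rat>" using r(1) yxr by (intro Rats_add Rats_diff Rats_of_nat Rats_1)
        ultimately have "1/x \<in> \<rat>" by simp
        then have xr: "x \<in> \<rat>" using recip_rat x0 by blast
        have "z/x = b - 1 + y/x" using e x0 by (simp add: field_simps)
        moreover have "b - 1 + y/x \<in> \<rat>" using r(2) yxr by (intro Rats_add Rats_diff Rats_1)
        ultimately have "z/x \<in> \<rat>" by simp
        then have "z \<in> \<rat>" using times_rat[OF x0 _ xr] by blast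
        moreover have "y \<in> \<rat>" using times_rat[OF x0 yxr xr] by blast
        ultimately show False using xr I unfolding irr_def by simp
      qed
      moreover have "y - z > 0" using c by linarith
      ultimately show ?thesis using xp e by blast
    next
      case C
      have e: "a = (1-z)/x - real n + 1" "b = (x-z)/x" "c = (y-z)/x" "sym_type (x,y,z) = TC" using gC[OF C n(1)] G by auto
      have c: "1 - real n * x < z" "z \<le> y" "y \<le> x" "x \<le> 1 / real n" using C unfolding inC_def by auto
      have bd: "real n * x \<le> 1" "1 < (real n + 1) * x" using inC_bnd[OF C n(1)] by auto
      have "(a,b,c) \<in> simplexS" using SC[OF xp c(1,2,3) bd(1)] e by simp
      moreover have "irr (a,b,c)"
      proof (rule ccontr)
        assume "\<not> irr (a,b,c)"
        then have r: "a \<in> \<rat>" "b \<in> \<rat>" "c \<in> \<rat>" unfolding irr_def by auto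
        have zx: "z/x = 1 - b" using e x0 by (simp add: field_simps)
        then have zxr: "z/x \<in> \<rat>" using r by (simp add: Rats_diff)
        have "1/x = a + real n - 1 + z/x" using e x0 by (simp add: field_simps)
        moreover have "a + real n - 1 + z/x \<in> \<rat>" using r(1) zxr by (intro Rats_add Rats_diff Rats_of_nat Rats_1)
        ultimately have "1/x \<in> \<rat>" by simp
        then have xr: "x \<in> \<rat>" using recip_rat x0 by blast
        have "y/x = c + z/x" using e x0 by (simp add: field_simps)
        moreover have "c + z/x \<in> \<rat>" using r(3) zxr by (intro Rats_add)
        ultimately have "y/x \<in> \<rat>" by simp
        then have "y \<in> \<rat>" using times_rat[OF x0 _ xr] by blast
        moreover have "z \<in> \<rat>" using times_rat[OF x0 zxr xr] by blast
        ultimately show False using xr I unfolding irr_def by simp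
      qed
      moreover have "z > 0" using c bd by linarith
      ultimately show ?thesis using xp e by blast
    qed
  qed
qed


lemma cnt_Suc: "card {j. j < Suc k \<and> P j} = card {j. j < k \<and> P j} + (if P k then 1 else 0)"
proof (cases "P k")
  case True
  have "{j. j < Suc k \<and> P j} = insert k {j. j < k \<and> P j}" using True by (auto simp: less_Suc_eq)
  then show ?thesis using True by simp
next
  case False
  have "{j. j < Suc k \<and> P j} = {j. j < k \<and> P j}" using False by (auto simp: less_Suc_eq)
  then show ?thesis using False by simp
qed

lemma inv_alt:
  fixes s :: "nat \<Rightarrow> symtype" and X E Q :: "nat \<Rightarrow> real"
  assumes alt: "nonA_alternate tE tO s"
    and Xp: "\<And>k. X k > 0"
    and TA: "\<And>k. s k = TA \<Longrightarrow> E (Suc k) = E k / X k \<and> Q (Suc k) = Q k / X k"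
    and TE: "\<And>k. s k = tE \<Longrightarrow> Q (Suc k) = E k / X k"
    and TO: "\<And>k. s k = tO \<Longrightarrow> E (Suc k) = Q k / X k"
  shows "(even (card {j. j < k \<and> s j \<noteq> TA}) \<longrightarrow> E k * (\<Prod>i<k. X i) = E 0)
       \<and> (odd (card {j. j < k \<and> s j \<noteq> TA}) \<longrightarrow> Q k * (\<Prod>i<k. X i) = E 0)"
proof (induction k)
  case 0
  then show ?case by simp
next
  case (Suc k)
  define c where "c = card {j. j < k \<and> s j \<noteq> TA}"
  define p where "p = (\<Prod>i<k. X i)"
  have cS: "card {j. j < Suc k \<and> s j \<noteq> TA} = c + (if s k \<noteq> TA then 1 else 0)"
    unfolding c_def by (rule cnt_Suc)
  have pS: "(\<Prod>i<Suc k. X i) = p * X k" unfolding p_def by simp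
  have xk: "X k \<noteq> 0" using Xp[of k] by simp
  have IH: "(even c \<longrightarrow> E k * p = E 0) \<and> (odd c \<longrightarrow> Q k * p = E 0)"
    using Suc.IH unfolding c_def p_def .
  show ?case
  proof (cases "s k = TA")
    case True
    have e: "E (Suc k) * (p * X k) = E k * p" "Q (Suc k) * (p * X k) = Q k * p"
      using TA[OF True] xk by auto
    show ?thesis unfolding cS pS e using True IH by simp
  next
    case False
    have sk: "s k = (if even c then tE else tO)"
      using alt False unfolding nonA_alternate_def c_def by blast
    show ?thesis
    proof (cases "even c")
      case True
      then have "s k = tE" using sk by simp
      then have "Q (Suc k) * (p * X k) = E k * p" using TE xk by auto
      then show ?thesis unfolding cS pS using True False IH by simp
    next
      case F: False
      then have "s k = tO" using sk by simp
      then have "E (Suc k) * (p * X k) = Q k * p" using TO xk by auto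
      then show ?thesis unfolding cS pS using F False IH by simp
    qed
  qed
qed

lemma zero_alt:
  fixes s :: "nat \<Rightarrow> symtype" and X E Q :: "nat \<Rightarrow> real"
  assumes E0: "E 0 = 0" and ne: "tE \<noteq> tO"
    and cov: "\<And>k. s k = TA \<or> s k = tE \<or> s k = tO"
    and TA: "\<And>k. s k = TA \<Longrightarrow> E (Suc k) = E k / X k \<and> Q (Suc k) = Q k / X k"
    and TE: "\<And>k. s k = tE \<Longrightarrow> Q (Suc k) = E k / X k \<and> Q k > 0"
    and TO: "\<And>k. s k = tO \<Longrightarrow> E (Suc k) = Q k / X k \<and> E k > 0"
  shows "nonA_alternate tE tO s"
proof -
  have I: "(even (card {j. j < k \<and> s j \<noteq> TA}) \<longrightarrow> E k = 0)
       \<and> (odd (card {j. j < k \<and> s j \<noteq> TA}) \<longrightarrow> Q k = 0)" for k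
  proof (induction k)
    case 0
    then show ?case using E0 by simp
  next
    case (Suc k)
    define c where "c = card {j. j < k \<and> s j \<noteq> TA}"
    have cS: "card {j. j < Suc k \<and> s j \<noteq> TA} = c + (if s k \<noteq> TA then 1 else 0)"
      unfolding c_def by (rule cnt_Suc)
    have IH: "(even c \<longrightarrow> E k = 0) \<and> (odd c \<longrightarrow> Q k = 0)"
      using Suc.IH unfolding c_def .
    consider "s k = TA" | "s k = tE" "s k \<noteq> TA" | "s k = tO" "s k \<noteq> TA" using cov[of k] by blast
    then show ?case
    proof cases
      case 1
      then show ?thesis unfolding cS using TA[OF 1] IH by simp
    next
      case 2
      have "even c" using TE[OF 2(1)] IH by auto
      then show ?thesis unfolding cS using TE[OF 2(1)] IH 2 by simp
    next
      case 3
      have "odd c" using TO[OF 3(1)] IH by auto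
      then show ?thesis unfolding cS using TO[OF 3(1)] IH 3 by simp
    qed
  qed
  show ?thesis unfolding nonA_alternate_def
  proof (intro allI impI)
    fix k assume nA: "s k \<noteq> TA"
    then consider "s k = tE" | "s k = tO" using cov[of k] by blast
    then show "s k = (if even (card {j. j < k \<and> s j \<noteq> TA}) then tE else tO)"
    proof cases
      case 1
      then show ?thesis using TE[OF 1] I[of k] by auto
    next
      case 2
      then show ?thesis using TO[OF 2] I[of k] ne by auto
    qed
  qed
qed

lemma prod_small:
  fixes X :: "nat \<Rightarrow> real"
  assumes "\<And>k. 0 < X k" "\<And>k. X k \<le> 1" "0 < e" "e < 1"
    and no: "\<And>k. \<not> (X k > 1 - e \<and> X (Suc k) > 1 - e)"
  shows "(\<Prod>i<2*m. X i) \<le> (1 - e) ^ m"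
proof (induction m)
  case 0
  then show ?case by simp
next
  case (Suc m)
  have eq: "(\<Prod>i<2*Suc m. X i) = (\<Prod>i<2*m. X i) * (X (2*m) * X (Suc (2*m)))"
    by (simp add: mult.assoc)
  have pp: "0 \<le> (\<Prod>i<2*m. X i)" using assms(1) by (simp add: prod_nonneg less_imp_le)
  have "X (2*m) * X (Suc (2*m)) \<le> 1 - e"
  proof (cases "X (2*m) > 1 - e")
    case True
    then have "X (Suc (2*m)) \<le> 1 - e" using no by force
    then have "X (2*m) * X (Suc (2*m)) \<le> 1 * (1 - e)"
      using assms(1,2)[of "2*m"] assms(1)[of "Suc (2*m)"] by (intro mult_mono) auto
    then show ?thesis by simp
  next
    case False
    then have "X (2*m) * X (Suc (2*m)) \<le> (1 - e) * 1"
      using assms(1,2)[of "Suc (2*m)"] assms(3,4) by (intro mult_mono) auto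
    then show ?thesis by simp
  qed
  then have "(\<Prod>i<2*m. X i) * (X (2*m) * X (Suc (2*m))) \<le> (1-e)^m * (1 - e)"
    using Suc.IH pp assms(3,4) assms(1)[of "2*m"] assms(1)[of "Suc (2*m)"] by (intro mult_mono) auto
  then show ?case unfolding eq power_Suc2 .
qed


lemma prod_pos_le1:
  fixes X :: "nat \<Rightarrow> real"
  assumes "\<And>k. 0 < X k" "\<And>k. X k \<le> 1"
  shows "0 < (\<Prod>i<k. X i) \<and> (\<Prod>i<k. X i) \<le> 1"
  using assms by (simp add: prod_pos prod_le_1 less_imp_le)

lemma exists_big:
  fixes X :: "nat \<Rightarrow> real"
  assumes "\<And>k. 0 < X k" "\<And>k. X k \<le> 1" "0 < c"
    and lb: "\<And>k. c \<le> (\<Prod>i<k. X i)"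
  shows "\<exists>k. X k > 1 - min c (1/2) \<and> X (Suc k) > 1 - min c (1/2)"
proof (rule ccontr)
  assume H: "\<not> ?thesis"
  define e where "e = min c (1/2)"
  have e: "0 < e" "e < 1" using assms(3) unfolding e_def by auto
  have no: "\<And>k. \<not> (X k > 1 - e \<and> X (Suc k) > 1 - e)" using H unfolding e_def by blast
  obtain m where m: "(1 - e) ^ m < c" using real_arch_pow_inv[OF assms(3), of "1 - e"] e by auto
  have "(\<Prod>i<2*m. X i) \<le> (1 - e) ^ m" using prod_small[of X e, OF assms(1,2) e no] .
  then show False using lb[of "2*m"] m by linarith
qed

lemma inv_bounds:
  fixes s :: "nat \<Rightarrow> symtype" and X E Q :: "nat \<Rightarrow> real"
  assumes alt: "nonA_alternate tE tO s"
    and Xp: "\<And>k. X k > 0" and X1: "\<And>k. X k \<le> 1"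
    and E1: "\<And>k. E k \<le> 1" and Q1: "\<And>k. Q k \<le> 1"
    and E0: "\<And>k. 0 \<le> E k" and Q0: "\<And>k. 0 \<le> Q k"
    and TA: "\<And>k. s k = TA \<Longrightarrow> E (Suc k) = E k / X k \<and> Q (Suc k) = Q k / X k"
    and TE: "\<And>k. s k = tE \<Longrightarrow> Q (Suc k) = E k / X k"
    and TO: "\<And>k. s k = tO \<Longrightarrow> E (Suc k) = Q k / X k"
  shows "(even (card {j. j < k \<and> s j \<noteq> TA}) \<longrightarrow> E 0 \<le> E k)
       \<and> (odd (card {j. j < k \<and> s j \<noteq> TA}) \<longrightarrow> E 0 \<le> Q k)
       \<and> E 0 \<le> (\<Prod>i<k. X i)"
proof -
  have I: "(even (card {j. j < k \<and> s j \<noteq> TA}) \<longrightarrow> E k * (\<Prod>i<k. X i) = E 0)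
       \<and> (odd (card {j. j < k \<and> s j \<noteq> TA}) \<longrightarrow> Q k * (\<Prod>i<k. X i) = E 0)"
    using inv_alt[of tE tO s X E Q, OF alt Xp TA TE TO] by blast
  define p where "p = (\<Prod>i<k. X i)"
  have p: "0 < p" "p \<le> 1" using prod_pos_le1[OF Xp X1] unfolding p_def by auto
  have I': "(even (card {j. j < k \<and> s j \<noteq> TA}) \<longrightarrow> E k * p = E 0)
       \<and> (odd (card {j. j < k \<and> s j \<noteq> TA}) \<longrightarrow> Q k * p = E 0)" using I unfolding p_def .
  have a1: "E 0 \<le> a" if "a * p = E 0" "0 \<le> a" for a
  proof -
    have "a * p \<le> a * 1" using p that by (intro mult_left_mono) auto
    then show ?thesis using that by simp
  qed
  have a2: "E 0 \<le> p" if "a * p = E 0" "a \<le> 1" for a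
  proof -
    have "a * p \<le> 1 * p" using p that by (intro mult_right_mono) auto
    then show ?thesis using that by simp
  qed
  show ?thesis unfolding p_def[symmetric] using I' a1 a2 E1 Q1 E0 Q0 by blast
qed

lemma bigC:
  assumes S: "(x,y,z) \<in> simplexS" and "x > 1/2" "1 - x < z"
  shows "sym_type (x,y,z) = TC"
proof -
  have xp: "x > 0" using assms by simp
  obtain n where n: "n \<ge> 1" "inA n (x,y,z) \<or> inB n (x,y,z) \<or> inC n (x,y,z)" using cover[OF S xp] by blast
  have s: "0 \<le> z" "z \<le> y" "y \<le> x" "x \<le> 1" using S unfolding simplexS_def by auto
  have "real n * x \<le> 1" using n inA_bnd inB_bnd inC_bnd by blast
  moreover have "real n \<ge> 1" using n by simp
  ultimately have "n = 1"
  proof -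
    assume a: "real n * x \<le> 1" "real n \<ge> 1"
    have "\<not> n \<ge> 2"
    proof
      assume "n \<ge> 2"
      then have "real n \<ge> 2" by simp
      then have "real n * x \<ge> 2 * x" using xp by (intro mult_right_mono) auto
      then show False using a assms by linarith
    qed
    then show "n = 1" using n by linarith
  qed
  then have "inC 1 (x,y,z)" using n assms s unfolding inA_def inB_def inC_def by auto
  then show ?thesis using gC by blast
qed

lemma bigNA:
  assumes S: "(x,y,z) \<in> simplexS" and "x > 1/2" "1 - x < y"
  shows "sym_type (x,y,z) \<noteq> TA"
proof
  assume "sym_type (x,y,z) = TA"
  then obtain n where n: "n \<ge> 1" "inA n (x,y,z)" unfolding sym_type_def by (auto split: if_splits)
  have xp: "x > 0" using assms by simp
  have a: "real n * x \<le> 1" using n inA_bnd by blast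
  have "\<not> n \<ge> 2"
  proof
    assume "n \<ge> 2"
    then have "real n \<ge> 2" by simp
    then have "real n * x \<ge> 2 * x" using xp by (intro mult_right_mono) auto
    then show False using a assms by linarith
  qed
  then have "n = 1" using n by linarith
  then show False using n assms unfolding inA_def by auto
qed


lemma orbit_inv:
  assumes "v \<in> simplexS" "irr v"
  shows "(gauss3^^k) v \<in> simplexS \<and> irr ((gauss3^^k) v)"
proof (induction k)
  case 0
  then show ?case using assms by simp
next
  case (Suc k)
  obtain x y z where e: "(gauss3^^k) v = (x,y,z)" by (metis prod_cases3)
  obtain a b c where g: "gauss3 (x,y,z) = (a,b,c)" by (metis prod_cases3)
  have "(a,b,c) \<in> simplexS \<and> irr (a,b,c)" using step[of x y z a b c] Suc.IH e g by auto
  then show ?case using e g by simp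
qed

theorem mainTheorem16:
  fixes x y z :: real
  assumes "(x, y, z) \<in> simplexS"
    and "x \<notin> \<rat> \<or> y \<notin> \<rat> \<or> z \<notin> \<rat>"
  shows "(nonA_alternate TB TC (itin_type (x, y, z)) \<longleftrightarrow> z = 0)
       \<and> (nonA_alternate TC TB (itin_type (x, y, z)) \<longleftrightarrow> y = z)"
proof -
  define v where "v = (x,y,z)"
  define V where "V k = (gauss3^^k) v" for k
  define X where "X k = fst (V k)" for k
  define Y where "Y k = fst (snd (V k))" for k
  define Z where "Z k = snd (snd (V k))" for k
  define s where "s = itin_type v"
  have Vk: "V k = (X k, Y k, Z k)" for k by (simp add: X_def Y_def Z_def)
  have irrv: "irr v" using assms(2) unfolding v_def irr_def by simp
  have VS: "V k \<in> simplexS \<and> irr (V k)" for k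
    unfolding V_def using orbit_inv[OF _ irrv] assms(1) v_def by blast
  have VSuc: "gauss3 (X k, Y k, Z k) = (X (Suc k), Y (Suc k), Z (Suc k))" for k
    using Vk[of k] Vk[of "Suc k"] by (simp add: V_def)
  have s_eq: "s k = sym_type (X k, Y k, Z k)" for k
    using Vk[of k] by (simp add: s_def itin_type_def V_def)
  have st: "X k > 0 \<and>
    ((s k = TA \<and> Y (Suc k) = Y k / X k \<and> Z (Suc k) = Z k / X k) \<or>
     (s k = TB \<and> Y (Suc k) = (X k - Y k + Z k) / X k \<and> Z (Suc k) = (X k - Y k) / X k \<and> Y k - Z k > 0) \<or>
     (s k = TC \<and> Y (Suc k) = (X k - Z k) / X k \<and> Z (Suc k) = (Y k - Z k) / X k \<and> Z k > 0))" for k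
    using step[OF _ _ VSuc[of k]] VS[of k] Vk[of k] s_eq[of k] by simp
  have Xp: "X k > 0" for k using st by blast
  have bd: "0 \<le> Z k" "Z k \<le> Y k" "Y k \<le> X k" "X k \<le> 1" for k
    using VS[of k] Vk[of k] unfolding simplexS_def by auto
  have SS: "(X k, Y k, Z k) \<in> simplexS" for k using VS[of k] Vk[of k] by simp
  have hA: "Y (Suc k) = Y k / X k \<and> Z (Suc k) = Z k / X k" if "s k = TA" for k
    using st[of k] that by auto
  have hB: "Y (Suc k) = (X k - Y k + Z k) / X k \<and> Z (Suc k) = (X k - Y k) / X k \<and> Y k - Z k > 0"
    if "s k = TB" for k using st[of k] that by auto
  have hC: "Y (Suc k) = (X k - Z k) / X k \<and> Z (Suc k) = (Y k - Z k) / X k \<and> Z k > 0"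
    if "s k = TC" for k using st[of k] that by auto
  have dA: "Y (Suc k) - Z (Suc k) = (Y k - Z k) / X k" if "s k = TA" for k
    using hA[OF that] by (simp add: diff_divide_distrib)
  have dB: "Y (Suc k) - Z (Suc k) = Z k / X k" if "s k = TB" for k
  proof -
    have "Y (Suc k) - Z (Suc k) = (X k - Y k + Z k) / X k - (X k - Y k) / X k"
      using hB[OF that] by simp
    also have "\<dots> = ((X k - Y k + Z k) - (X k - Y k)) / X k"
      by (rule diff_divide_distrib[symmetric])
    finally have "Y (Suc k) - Z (Suc k) = ((X k - Y k + Z k) - (X k - Y k)) / X k" .
    then show ?thesis by simp
  qed
  have cov: "s k = TA \<or> s k = TB \<or> s k = TC" for k by (cases "s k") auto
  have x0: "X 0 = x" "Y 0 = y" "Z 0 = z" by (simp_all add: X_def Y_def Z_def V_def v_def)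
  define cnt where "cnt k = card {j. j < k \<and> s j \<noteq> TA}" for k
  have cntS: "cnt (Suc k) = cnt k + (if s k \<noteq> TA then 1 else 0)" for k
    unfolding cnt_def by (rule cnt_Suc)
  have altE: "s k = (if even (cnt k) then tE else tO)"
    if "nonA_alternate tE tO s" "s k \<noteq> TA" for tE tO k
    using that unfolding nonA_alternate_def cnt_def by blast
  have X1: "X k \<le> 1" for k using bd(4) .
  have Q1: "Y k - Z k \<le> 1" and Q0: "0 \<le> Y k - Z k" and Z1: "Z k \<le> 1" for k
    using bd[of k] by linarith+
  have pTA: "Z (Suc k) = Z k / X k \<and> Y (Suc k) - Z (Suc k) = (Y k - Z k) / X k" if "s k = TA" for k
    using hA[OF that] dA[OF that] by blast
  have pTA2: "Y (Suc k) - Z (Suc k) = (Y k - Z k) / X k \<and> Z (Suc k) = Z k / X k" if "s k = TA" for k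
    using hA[OF that] dA[OF that] by blast
  have pTB: "Y (Suc k) - Z (Suc k) = Z k / X k" if "s k = TB" for k using dB[OF that] .
  have pTB': "Y (Suc k) - Z (Suc k) = Z k / X k \<and> Y k - Z k > 0" if "s k = TB" for k
    using dB[OF that] hB[OF that] by blast
  have pTC: "Z (Suc k) = (Y k - Z k) / X k" if "s k = TC" for k using hC[OF that] by blast
  have pTC': "Z (Suc k) = (Y k - Z k) / X k \<and> Z k > 0" if "s k = TC" for k using hC[OF that] by blast
  have part1: "nonA_alternate TB TC s \<longleftrightarrow> z = 0"
  proof
    assume z: "z = 0"
    have "Z 0 = 0" using z x0 by simp
    then show "nonA_alternate TB TC s"
      using zero_alt[of Z TB TC s X "\<lambda>k. Y k - Z k"] cov pTA pTB' pTC' by blast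
  next
    assume alt: "nonA_alternate TB TC s"
    show "z = 0"
    proof (rule ccontr)
      assume "z \<noteq> 0"
      then have zp: "z > 0" using bd(1)[of 0] x0 by simp
      have IB0: "(even (cnt k) \<longrightarrow> Z 0 \<le> Z k) \<and> (odd (cnt k) \<longrightarrow> Z 0 \<le> Y k - Z k) \<and> Z 0 \<le> (\<Prod>i<k. X i)" for k
        using inv_bounds[of TB TC s X Z "\<lambda>k. Y k - Z k", OF alt Xp X1 Z1 Q1 bd(1) Q0 pTA pTB pTC]
        unfolding cnt_def by blast
      have IB: "(even (cnt k) \<longrightarrow> z \<le> Z k) \<and> (odd (cnt k) \<longrightarrow> z \<le> Y k - Z k) \<and> z \<le> (\<Prod>i<k. X i)" for k
        using IB0[of k] x0 by simp
      have lb: "z \<le> (\<Prod>i<k. X i)" for k using IB by blast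
      obtain k where k: "X k > 1 - min z (1/2)" "X (Suc k) > 1 - min z (1/2)"
        using exists_big[of X z, OF Xp X1 zp lb] by blast
      have kk: "X k > 1/2" "1 - X k < z" "X (Suc k) > 1/2" "1 - X (Suc k) < z" using k by linarith+
      show False
      proof (cases "even (cnt k)")
        case True
        have "s k = TC" unfolding s_eq using bigC[OF SS[of k] kk(1)] kk(2) IB[of k] True by simp
        then show False using altE[OF alt, of k] True by simp
      next
        case False
        have "1 - X k < Y k" using kk(2) IB[of k] False bd(1)[of k] by linarith
        then have "s k \<noteq> TA" unfolding s_eq using bigNA[OF SS[of k] kk(1)] by simp
        then have sk: "s k = TC" using altE[OF alt, of k] False by simp
        then have ev: "even (cnt (Suc k))" using cntS[of k] False by simp
        have "s (Suc k) = TC" unfolding s_eq using bigC[OF SS[of "Suc k"] kk(3)] kk(4) IB[of "Suc k"] ev by simp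
        then show False using altE[OF alt, of "Suc k"] ev by simp
      qed
    qed
  qed
  have part2: "nonA_alternate TC TB s \<longleftrightarrow> y = z"
  proof
    assume yz: "y = z"
    have "Y 0 - Z 0 = 0" using yz x0 by simp
    then show "nonA_alternate TC TB s"
      using zero_alt[of "\<lambda>k. Y k - Z k" TC TB s X Z] cov pTA2 pTB' pTC' by blast
  next
    assume alt: "nonA_alternate TC TB s"
    show "y = z"
    proof (rule ccontr)
      assume "y \<noteq> z"
      then have zp: "y - z > 0" using bd(2)[of 0] x0 by simp
      have IB0: "(even (cnt k) \<longrightarrow> Y 0 - Z 0 \<le> Y k - Z k) \<and> (odd (cnt k) \<longrightarrow> Y 0 - Z 0 \<le> Z k) \<and> Y 0 - Z 0 \<le> (\<Prod>i<k. X i)" for k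
        using inv_bounds[of TC TB s X "\<lambda>k. Y k - Z k" Z, OF alt Xp X1 Q1 Z1 Q0 bd(1) pTA2 pTC pTB]
        unfolding cnt_def by blast
      have IB: "(even (cnt k) \<longrightarrow> y - z \<le> Y k - Z k) \<and> (odd (cnt k) \<longrightarrow> y - z \<le> Z k) \<and> y - z \<le> (\<Prod>i<k. X i)" for k
        using IB0[of k] x0 by simp
      have lb: "y - z \<le> (\<Prod>i<k. X i)" for k using IB by blast
      obtain k where k: "X k > 1 - min (y - z) (1/2)" "X (Suc k) > 1 - min (y - z) (1/2)"
        using exists_big[of X "y - z", OF Xp X1 zp lb] by blast
      have kk: "X k > 1/2" "1 - X k < y - z" "X (Suc k) > 1/2" "1 - X (Suc k) < y - z" using k by linarith+
      show False
      proof (cases "odd (cnt k)")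
        case True
        have "s k = TC" unfolding s_eq using bigC[OF SS[of k] kk(1)] kk(2) IB[of k] True by simp
        then show False using altE[OF alt, of k] True by simp
      next
        case False
        have "1 - X k < Y k" using kk(2) IB[of k] False bd(1)[of k] by linarith
        then have "s k \<noteq> TA" unfolding s_eq using bigNA[OF SS[of k] kk(1)] by simp
        then have sk: "s k = TC" using altE[OF alt, of k] False by simp
        then have ev: "odd (cnt (Suc k))" using cntS[of k] False by simp
        have "s (Suc k) = TC" unfolding s_eq using bigC[OF SS[of "Suc k"] kk(3)] kk(4) IB[of "Suc k"] ev by simp
        then show False using altE[OF alt, of "Suc k"] ev by simp
      qed
    qed
  qed
  show ?thesis using part1 part2 unfolding s_def v_def by blast
qed

end
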